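(* Let $n \ge 3$ and let $S \subseteq \{1,\dots,n\}$ with $|S| = 3$. Then there exist $u \in \mathbb{R}^4$, $W \in \mathbb{R}^{4 \times n}$ and $b \in \mathbb{R}^4$ such that the network $f(x) = u^\intercal \sigma(Wx + b)$ satisfies, for every $x \in \{\pm 1\}^n$, $f(x) > 0$ if $\prod_{i \in S} x_i = 1$ and $f(x) < 0$ if $\prod_{i \in S} x_i = -1$.
   Context: Here $\sigma$ is the ReLU function $\sigma(z) = \max(0,z)$, applied componentwise. A 1-layer ReLU net with $p$ hidden neurons is a function $f(x) = u^\intercal \sigma(Wx+b)$ with $u \in \mathbb{R}^p$, $W \in \mathbb{R}^{p\times n}$, $b \in \mathbb{R}^p$; it computes the $(n,3)$-parity with hidden index set $S$ if its output is positive exactly when $\prod_{i\in S} x_i = 1$ and negative otherwise. *)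

theory Defs
  imports "HOL-Analysis.Analysis"
begin

definition relu :: "real \<Rightarrow> real" where
  "relu z = max 0 z"

definition relu_net :: "nat \<Rightarrow> nat \<Rightarrow> (nat \<Rightarrow> real) \<Rightarrow> (nat \<Rightarrow> nat \<Rightarrow> real) \<Rightarrow> (nat \<Rightarrow> real)
    \<Rightarrow> (nat \<Rightarrow> real) \<Rightarrow> real" where
  "relu_net n p u W b x = (\<Sum>j<p. u j * relu ((\<Sum>i=1..n. W j i * x i) + b j))"

end

theory Submission
  imports Defs
begin

theorem proposition3:
  fixes n :: nat and S :: "nat set"
  assumes "n \<ge> 3" and "S \<subseteq> {1..n}" and "card S = 3"
  shows "\<exists>(u :: nat \<Rightarrow> real) (W :: nat \<Rightarrow> nat \<Rightarrow> real) (b :: nat \<Rightarrow> real).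
           \<forall>x :: nat \<Rightarrow> real. (\<forall>i\<in>{1..n}. x i = 1 \<or> x i = -1) \<longrightarrow>
             ((\<Prod>i\<in>S. x i) = 1 \<longrightarrow> relu_net n 4 u W b x > 0) \<and>
             ((\<Prod>i\<in>S. x i) = -1 \<longrightarrow> relu_net n 4 u W b x < 0)"
proof -
  obtain a1 a2 a3 where S: "S = {a1,a2,a3}" and d: "a1 \<noteq> a2" "a1 \<noteq> a3" "a2 \<noteq> a3"
    using assms(3) by (metis card_3_iff)
  define u :: "nat \<Rightarrow> real" where "u j = [-1,4,-8,12] ! j" for j
  define b :: "nat \<Rightarrow> real" where "b j = [4,2,0,-2] ! j" for j
  define W :: "nat \<Rightarrow> nat \<Rightarrow> real" where "W j i = (if i \<in> S then 1 else 0)" for j i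
  have four: "{..<4::nat} = {0,1,2,3}" by auto
  show ?thesis
  proof (rule exI[of _ u], rule exI[of _ W], rule exI[of _ b], intro allI impI)
    fix x :: "nat \<Rightarrow> real"
    assume x: "\<forall>i\<in>{1..n}. x i = 1 \<or> x i = -1"
    have sw: "(\<Sum>i=1..n. W j i * x i) = (\<Sum>i\<in>S. x i)" for j
    proof -
      have "(\<Sum>i=1..n. W j i * x i) = (\<Sum>i\<in>{1..n}. if i \<in> S then x i else 0)"
        by (rule sum.cong) (auto simp: W_def)
      also have "\<dots> = (\<Sum>i\<in>{1..n} \<inter> S. x i)" by (simp add: sum.inter_restrict)
      also have "{1..n} \<inter> S = S" using assms(2) by auto
      finally show ?thesis .
    qed
    have sS: "(\<Sum>i\<in>S. x i) = x a1 + x a2 + x a3" and pS: "(\<Prod>i\<in>S. x i) = x a1 * x a2 * x a3"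
      using d by (auto simp: S)
    have r: "relu_net n 4 u W b x = (\<Sum>j\<in>{0,1,2,3}. u j * relu (x a1 + x a2 + x a3 + b j))"
      by (simp only: relu_net_def sw sS four)
    have xs: "(x a1 = 1 \<or> x a1 = -1) \<and> (x a2 = 1 \<or> x a2 = -1) \<and> (x a3 = 1 \<or> x a3 = -1)"
      using x assms(2) S by auto
    have key: "x a1 * x a2 * x a3 = (1::real) \<longrightarrow> (\<Sum>j\<in>{0::nat,1,2,3}. ([-1,4,-8,12::real] ! j) * relu (x a1 + x a2 + x a3 + [4,2,0,-2::real] ! j)) > 0"
      "x a1 * x a2 * x a3 = (-1::real) \<longrightarrow> (\<Sum>j\<in>{0::nat,1,2,3}. ([-1,4,-8,12::real] ! j) * relu (x a1 + x a2 + x a3 + [4,2,0,-2::real] ! j)) < 0"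
      using xs
      apply (simp_all add: relu_def numeral_3_eq_3 numeral_2_eq_2)
      apply (elim conjE disjE; simp)+
      done
    have k1: "(\<Prod>i\<in>S. x i) = 1 \<longrightarrow> relu_net n 4 u W b x > 0"
      using key by (simp only: r pS u_def b_def)
    have k2: "(\<Prod>i\<in>S. x i) = -1 \<longrightarrow> relu_net n 4 u W b x < 0"
      using key by (simp only: r pS u_def b_def)
    show "((\<Prod>i\<in>S. x i) = 1 \<longrightarrow> relu_net n 4 u W b x > 0) \<and>
             ((\<Prod>i\<in>S. x i) = -1 \<longrightarrow> relu_net n 4 u W b x < 0)"
      using k1 k2 by blast
  qed
qed

end
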